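(* Let $1\le k\le n$, let $Q$ be a symmetric $n\times n$ matrix with entries in $[0,1]$ and zero diagonal, and let $A=\mathrm{Bern}(Q)$. Let $\varepsilon=\max_{\pi:[n]\to[k]}\|A_\pi-Q_\pi\|_1$. Then \[ \mathbb E[\varepsilon]\le9\sqrt{\rho(Q)\Big(\frac{1+\log k}{n}+\frac{k^2}{n^2}\Big)}, \] and if $n\rho(Q)\ge1$, then with probability at least $1-e^{-n}$, \[ \varepsilon\le8\sqrt{\rho(Q)\Big(\frac{1+\log k}{n}+\frac{k^2}{n^2}\Big)}. \]
   Context: $\mathrm{Bern}(Q)$ is the random symmetric $\{0,1\}$-matrix with $A_{ij}=A_{ji}=1$ with probability $Q_{ij}$ independently for $i<j$ and $A_{ii}=0$. For an $n\times n$ matrix $H$: $\|H\|_1=\frac1{n^2}\sum_{i,j}|H_{ij}|$ and $\rho(H)=\frac1{n^2}\sum_{i,j}H_{ij}$. For $\pi:[n]\to[k]$ with classes $V_i=\pi^{-1}(i)$, $H_\pi$ is the $n\times n$ matrix whose entry at $(u,v)\in V_i\times V_j$ is the average $\frac1{|V_i||V_j|}\sum_{(a,b)\in V_i\times V_j}H_{ab}$. *)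

theory Defs
  imports "HOL-Probability.Probability"
begin

text \<open>n x n matrices are represented as functions nat => nat => real; only the
entries with indices below n matter.\<close>

definition bern :: "nat \<Rightarrow> (nat \<Rightarrow> nat \<Rightarrow> real) \<Rightarrow> (nat \<Rightarrow> nat \<Rightarrow> real) pmf" where
  "bern n Q = map_pmf
     (\<lambda>b i j. if i < j then (if b (i, j) then 1 else 0)
              else if j < i then (if b (j, i) then 1 else 0) else 0)
     (Pi_pmf {(i, j). i < j \<and> j < n} False (\<lambda>(i, j). bernoulli_pmf (Q i j)))"

definition norm1 :: "nat \<Rightarrow> (nat \<Rightarrow> nat \<Rightarrow> real) \<Rightarrow> real" where
  "norm1 n H = (1 / (real n)^2) * (\<Sum>i<n. \<Sum>j<n. \<bar>H i j\<bar>)"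

definition rho :: "nat \<Rightarrow> (nat \<Rightarrow> nat \<Rightarrow> real) \<Rightarrow> real" where
  "rho n H = (1 / (real n)^2) * (\<Sum>i<n. \<Sum>j<n. H i j)"

definition cls :: "nat \<Rightarrow> (nat \<Rightarrow> nat) \<Rightarrow> nat \<Rightarrow> nat set" where
  "cls n \<pi> i = {a. a < n \<and> \<pi> a = i}"

definition blockavg :: "nat \<Rightarrow> (nat \<Rightarrow> nat) \<Rightarrow> (nat \<Rightarrow> nat \<Rightarrow> real) \<Rightarrow> nat \<Rightarrow> nat \<Rightarrow> real" where
  "blockavg n \<pi> H u v =
     (\<Sum>a\<in>cls n \<pi> (\<pi> u). \<Sum>b\<in>cls n \<pi> (\<pi> v). H a b)
       / (real (card (cls n \<pi> (\<pi> u))) * real (card (cls n \<pi> (\<pi> v))))"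

definition eps :: "nat \<Rightarrow> nat \<Rightarrow> (nat \<Rightarrow> nat \<Rightarrow> real) \<Rightarrow> (nat \<Rightarrow> nat \<Rightarrow> real) \<Rightarrow> real" where
  "eps n k A Q = Max ((\<lambda>\<pi>. norm1 n (\<lambda>u v. blockavg n \<pi> A u v - blockavg n \<pi> Q u v))
                        ` ({..<n} \<rightarrow>\<^sub>E {..<k}))"

end

theory Submission
  imports Defs
begin

definition Ip :: "nat \<Rightarrow> (nat \<times> nat) set" where
  "Ip n = {(i, j). i < j \<and> j < n}"

lemma finite_Ip[simp]: "finite (Ip n)"
  unfolding Ip_def by (rule finite_subset[of _ "{..<n} \<times> {..<n}"]) auto

lemma Ip_Suc: "Ip (Suc n) = Ip n \<union> (\<lambda>a. (a, n)) ` {..<n}"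
  unfolding Ip_def by auto

lemma sum_pairs:
  fixes h :: "nat \<Rightarrow> nat \<Rightarrow> real"
  assumes "\<And>a. a < n \<Longrightarrow> h a a = 0"
  shows "(\<Sum>a<n. \<Sum>b<n. h a b) = (\<Sum>e\<in>Ip n. h (fst e) (snd e) + h (snd e) (fst e))"
  using assms
proof (induction n)
  case 0
  then show ?case by (simp add: Ip_def)
next
  case (Suc n)
  have IH: "(\<Sum>a<n. \<Sum>b<n. h a b) = (\<Sum>e\<in>Ip n. h (fst e) (snd e) + h (snd e) (fst e))"
    using Suc by auto
  have disj: "Ip n \<inter> (\<lambda>a. (a, n)) ` {..<n} = {}" by (auto simp: Ip_def)
  have "(\<Sum>e\<in>Ip (Suc n). h (fst e) (snd e) + h (snd e) (fst e))
      = (\<Sum>e\<in>Ip n. h (fst e) (snd e) + h (snd e) (fst e))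
        + (\<Sum>e\<in>(\<lambda>a. (a, n)) ` {..<n}. h (fst e) (snd e) + h (snd e) (fst e))"
    unfolding Ip_Suc by (rule sum.union_disjoint) (use disj in auto)
  also have "(\<Sum>e\<in>(\<lambda>a. (a, n)) ` {..<n}. h (fst e) (snd e) + h (snd e) (fst e))
      = (\<Sum>a<n. h a n + h n a)"
    by (subst sum.reindex) (auto simp: inj_on_def)
  finally have R: "(\<Sum>e\<in>Ip (Suc n). h (fst e) (snd e) + h (snd e) (fst e))
      = (\<Sum>a<n. \<Sum>b<n. h a b) + (\<Sum>a<n. h a n) + (\<Sum>a<n. h n a)"
    using IH by (simp add: sum.distrib)
  have hn: "h n n = 0" using Suc.prems by auto
  have "(\<Sum>a<Suc n. \<Sum>b<Suc n. h a b) = (\<Sum>a<n. \<Sum>b<n. h a b) + (\<Sum>a<n. h a n) + (\<Sum>b<n. h n b) + h n n"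
    by (simp add: sum.distrib)
  then show ?case using R hn by simp
qed

lemma cls_eq: "u < n \<Longrightarrow> \<pi> a = \<pi> u \<Longrightarrow> cls n \<pi> (\<pi> a) = cls n \<pi> (\<pi> u)" by simp

lemma finite_cls[simp]: "finite (cls n \<pi> i)"
  unfolding cls_def by auto

lemma card_cls_pos: "u < n \<Longrightarrow> card (cls n \<pi> (\<pi> u)) > 0"
  using finite_cls[of n \<pi> "\<pi> u"] by (subst card_gt_0_iff) (auto simp: cls_def)

lemma sum_cls: "(\<Sum>a\<in>cls n \<pi> i. g a) = (\<Sum>a<n. if \<pi> a = i then g a else 0)"
  unfolding cls_def by (simp add: sum.If_cases[of "{..<n}"] Int_def)

lemma sum4_swap:
  "(\<Sum>u\<in>A. \<Sum>v\<in>A. \<Sum>a\<in>A. \<Sum>b\<in>A. (F u v a b :: real))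
   = (\<Sum>a\<in>A. \<Sum>b\<in>A. \<Sum>u\<in>A. \<Sum>v\<in>A. F u v a b)"
proof -
  have "(\<Sum>u\<in>A. \<Sum>v\<in>A. \<Sum>a\<in>A. \<Sum>b\<in>A. F u v a b)
      = (\<Sum>u\<in>A. \<Sum>a\<in>A. \<Sum>v\<in>A. \<Sum>b\<in>A. F u v a b)"
    by (rule sum.cong[OF refl], rule sum.swap)
  also have "\<dots> = (\<Sum>a\<in>A. \<Sum>u\<in>A. \<Sum>v\<in>A. \<Sum>b\<in>A. F u v a b)"
    by (rule sum.swap)
  also have "\<dots> = (\<Sum>a\<in>A. \<Sum>u\<in>A. \<Sum>b\<in>A. \<Sum>v\<in>A. F u v a b)"
    by (rule sum.cong[OF refl], rule sum.cong[OF refl], rule sum.swap)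
  also have "\<dots> = (\<Sum>a\<in>A. \<Sum>b\<in>A. \<Sum>u\<in>A. \<Sum>v\<in>A. F u v a b)"
    by (rule sum.cong[OF refl], rule sum.swap)
  finally show ?thesis .
qed

lemma block_swap:
  fixes D :: "nat \<Rightarrow> nat \<Rightarrow> real"
  shows "(\<Sum>u<n. \<Sum>v<n. f (\<pi> u) (\<pi> v) * blockavg n \<pi> D u v)
       = (\<Sum>a<n. \<Sum>b<n. f (\<pi> a) (\<pi> b) * D a b)"
proof -
  define c where "c u = real (card (cls n \<pi> (\<pi> u)))" for u
  have ba: "blockavg n \<pi> D u v = (\<Sum>a<n. \<Sum>b<n. (if \<pi> a = \<pi> u \<and> \<pi> b = \<pi> v then D a b / (c u * c v) else 0))" for u v
    unfolding blockavg_def c_def sum_cls sum_divide_distrib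
    by (intro sum.cong refl) (auto simp: sum_divide_distrib intro!: sum.cong)
  have "(\<Sum>u<n. \<Sum>v<n. f (\<pi> u) (\<pi> v) * blockavg n \<pi> D u v)
      = (\<Sum>u<n. \<Sum>v<n. \<Sum>a<n. \<Sum>b<n. (if \<pi> a = \<pi> u \<and> \<pi> b = \<pi> v then f (\<pi> a) (\<pi> b) * D a b / (c u * c v) else 0))"
    unfolding ba sum_distrib_left by (intro sum.cong refl) auto
  also have "\<dots> = (\<Sum>a<n. \<Sum>b<n. \<Sum>u<n. \<Sum>v<n. (if \<pi> a = \<pi> u \<and> \<pi> b = \<pi> v then f (\<pi> a) (\<pi> b) * D a b / (c u * c v) else 0))"
    by (rule sum4_swap)
  also have "\<dots> = (\<Sum>a<n. \<Sum>b<n. f (\<pi> a) (\<pi> b) * D a b)"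
  proof (intro sum.cong refl)
    fix a b assume a: "a \<in> {..<n}" and b: "b \<in> {..<n}"
    have ca: "c a > 0" "c b > 0" using card_cls_pos a b by (auto simp: c_def)
    have "(\<Sum>u<n. \<Sum>v<n. (if \<pi> a = \<pi> u \<and> \<pi> b = \<pi> v then f (\<pi> a) (\<pi> b) * D a b / (c u * c v) else 0))
        = (\<Sum>u<n. \<Sum>v<n. (if \<pi> u = \<pi> a then 1 / c a else 0) * ((if \<pi> v = \<pi> b then 1 / c b else 0) * (f (\<pi> a) (\<pi> b) * D a b)))"
      by (intro sum.cong refl) (auto simp: c_def)
    also have "\<dots> = (\<Sum>u<n. (if \<pi> u = \<pi> a then 1 / c a else 0)) * ((\<Sum>v<n. (if \<pi> v = \<pi> b then 1 / c b else 0)) * (f (\<pi> a) (\<pi> b) * D a b))"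
      apply (simp only: sum_distrib_left sum_distrib_right) by (rule sum.swap)
    also have "(\<Sum>u<n. (if \<pi> u = \<pi> a then 1 / c a else 0)) = 1"
      using ca unfolding c_def by (auto simp: sum_cls[symmetric])
    also have "(\<Sum>v<n. (if \<pi> v = \<pi> b then 1 / c b else 0)) = 1"
      using ca unfolding c_def by (auto simp: sum_cls[symmetric])
    finally show "(\<Sum>u<n. \<Sum>v<n. (if \<pi> a = \<pi> u \<and> \<pi> b = \<pi> v then f (\<pi> a) (\<pi> b) * D a b / (c u * c v) else 0))
        = f (\<pi> a) (\<pi> b) * D a b" by simp
  qed
  finally show ?thesis .
qed

definition ind :: "bool \<Rightarrow> real" where "ind b = (if b then 1 else 0)"

definition matA :: "(nat \<times> nat \<Rightarrow> bool) \<Rightarrow> nat \<Rightarrow> nat \<Rightarrow> real" where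
  "matA \<omega> = (\<lambda>i j. if i < j then (if \<omega> (i, j) then 1 else 0)
              else if j < i then (if \<omega> (j, i) then 1 else 0) else 0)"

definition Xf :: "nat \<Rightarrow> (nat \<Rightarrow> nat \<Rightarrow> real) \<Rightarrow> (nat \<times> nat \<Rightarrow> real) \<Rightarrow> (nat \<times> nat \<Rightarrow> bool) \<Rightarrow> real" where
  "Xf n Q d \<omega> = (\<Sum>e\<in>Ip n. d e * (ind (\<omega> e) - Q (fst e) (snd e)))"

definition dd :: "(nat \<Rightarrow> nat) \<Rightarrow> (nat \<times> nat \<Rightarrow> real) \<Rightarrow> nat \<times> nat \<Rightarrow> real" where
  "dd \<pi> \<sigma> e = (\<sigma> (\<pi> (fst e), \<pi> (snd e)) + \<sigma> (\<pi> (snd e), \<pi> (fst e))) / 2"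

definition Fam :: "nat \<Rightarrow> nat \<Rightarrow> ((nat \<Rightarrow> nat) \<times> (nat \<times> nat \<Rightarrow> real)) set" where
  "Fam n k = ({..<n} \<rightarrow>\<^sub>E {..<k}) \<times> (({..<k} \<times> {..<k}) \<rightarrow>\<^sub>E {-1, 1})"

lemma matA_sym: "matA \<omega> a b = matA \<omega> b a" unfolding matA_def by auto
lemma matA_diag: "matA \<omega> a a = 0" unfolding matA_def by auto
lemma matA_Ip: "e \<in> Ip n \<Longrightarrow> matA \<omega> (fst e) (snd e) = ind (\<omega> e)"
  unfolding matA_def Ip_def ind_def by auto

lemma ind_bounds: "0 \<le> ind b" "ind b \<le> 1" unfolding ind_def by auto

lemma dd_cases:
  assumes "(\<pi>, \<sigma>) \<in> Fam n k" "e \<in> Ip n"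
  shows "dd \<pi> \<sigma> e \<in> {-1, 0, 1}"
proof -
  have "\<pi> (fst e) < k" "\<pi> (snd e) < k" using assms by (auto simp: Fam_def Ip_def PiE_def Pi_def)
  then have "\<sigma> (\<pi> (fst e), \<pi> (snd e)) \<in> {-1,1}" "\<sigma> (\<pi> (snd e), \<pi> (fst e)) \<in> {-1,1}"
    using assms(1) by (auto simp: Fam_def PiE_def Pi_def)
  then show ?thesis unfolding dd_def by auto
qed

lemma card_Fam: "card (Fam n k) = k ^ n * 2 ^ (k * k)"
proof -
  have c2: "card {-1, 1::real} = 2" by simp
  show ?thesis unfolding Fam_def by (simp add: card_cartesian_product card_PiE prod_constant c2)
qed

lemma finite_Fam[simp]: "finite (Fam n k)"
  unfolding Fam_def by (auto intro!: finite_PiE)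

lemma sum_sym_Ip:
  fixes H :: "nat \<Rightarrow> nat \<Rightarrow> real"
  assumes "\<And>a b. a < n \<Longrightarrow> b < n \<Longrightarrow> H a b = H b a" "\<And>a. a < n \<Longrightarrow> H a a = 0"
  shows "(\<Sum>a<n. \<Sum>b<n. H a b) = 2 * (\<Sum>e\<in>Ip n. H (fst e) (snd e))"
proof -
  have "(\<Sum>a<n. \<Sum>b<n. H a b) = (\<Sum>e\<in>Ip n. H (fst e) (snd e) + H (snd e) (fst e))"
    by (rule sum_pairs) (use assms in auto)
  also have "\<dots> = (\<Sum>e\<in>Ip n. 2 * H (fst e) (snd e))"
    by (intro sum.cong refl) (use assms(1) in \<open>auto simp: Ip_def\<close>)
  finally show ?thesis by (simp add: sum_distrib_left)
qed

lemma rho_mat: "rho n (matA \<omega>) = 2 / (real n)^2 * (\<Sum>e\<in>Ip n. ind (\<omega> e))"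
proof -
  have "(\<Sum>a<n. \<Sum>b<n. matA \<omega> a b) = 2 * (\<Sum>e\<in>Ip n. matA \<omega> (fst e) (snd e))"
    by (rule sum_sym_Ip) (auto simp: matA_sym matA_diag)
  also have "\<dots> = 2 * (\<Sum>e\<in>Ip n. ind (\<omega> e))"
    by (simp add: matA_Ip)
  finally show ?thesis unfolding rho_def by simp
qed

lemma rho_Q:
  assumes "\<And>a b. a < n \<Longrightarrow> b < n \<Longrightarrow> Q a b = Q b a" "\<And>a. a < n \<Longrightarrow> Q a a = 0"
  shows "rho n Q = 2 / (real n)^2 * (\<Sum>e\<in>Ip n. Q (fst e) (snd e))"
  unfolding rho_def using sum_sym_Ip[of n Q, OF assms] by simp

lemma rep:
  fixes Q :: "nat \<Rightarrow> nat \<Rightarrow> real"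
  assumes sym: "\<And>a b. a < n \<Longrightarrow> b < n \<Longrightarrow> Q a b = Q b a"
    and diag: "\<And>a. a < n \<Longrightarrow> Q a a = 0"
    and pi: "\<pi> \<in> {..<n} \<rightarrow>\<^sub>E {..<k}"
  shows "\<exists>\<sigma>. (\<pi>, \<sigma>) \<in> Fam n k \<and>
    norm1 n (\<lambda>u v. blockavg n \<pi> (matA \<omega>) u v - blockavg n \<pi> Q u v) = 2 / (real n)^2 * Xf n Q (dd \<pi> \<sigma>) \<omega>"
proof -
  define D where "D a b = matA \<omega> a b - Q a b" for a b
  define sg where "sg i j = (if 0 \<le> (\<Sum>a\<in>cls n \<pi> i. \<Sum>b\<in>cls n \<pi> j. D a b) then 1 else -1 :: real)" for i j
  define \<sigma> where "\<sigma> = restrict (\<lambda>(i, j). sg i j) ({..<k} \<times> {..<k})"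
  have Fm: "(\<pi>, \<sigma>) \<in> Fam n k" unfolding Fam_def \<sigma>_def using pi by (auto simp: sg_def split: if_splits)
  have diff: "blockavg n \<pi> (matA \<omega>) u v - blockavg n \<pi> Q u v = blockavg n \<pi> D u v" for u v
    unfolding blockavg_def D_def by (simp add: sum_subtractf diff_divide_distrib)
  have absb: "\<bar>blockavg n \<pi> D u v\<bar> = sg (\<pi> u) (\<pi> v) * blockavg n \<pi> D u v" if "u < n" "v < n" for u v
  proof -
    have p: "real (card (cls n \<pi> (\<pi> u))) * real (card (cls n \<pi> (\<pi> v))) > 0"
      using card_cls_pos that by auto
    show ?thesis unfolding blockavg_def sg_def using p
      by (auto simp: abs_if divide_less_0_iff zero_le_divide_iff)
  qed
  have "(\<Sum>u<n. \<Sum>v<n. \<bar>blockavg n \<pi> D u v\<bar>) = (\<Sum>u<n. \<Sum>v<n. sg (\<pi> u) (\<pi> v) * blockavg n \<pi> D u v)"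
    by (intro sum.cong refl) (simp add: absb)
  also have "\<dots> = (\<Sum>a<n. \<Sum>b<n. sg (\<pi> a) (\<pi> b) * D a b)"
    by (rule block_swap)
  also have "\<dots> = (\<Sum>e\<in>Ip n. sg (\<pi> (fst e)) (\<pi> (snd e)) * D (fst e) (snd e) + sg (\<pi> (snd e)) (\<pi> (fst e)) * D (snd e) (fst e))"
    by (rule sum_pairs) (auto simp: D_def matA_diag diag)
  also have "\<dots> = (\<Sum>e\<in>Ip n. 2 * (dd \<pi> \<sigma> e * (ind (\<omega> e) - Q (fst e) (snd e))))"
  proof (intro sum.cong refl)
    fix e assume e: "e \<in> Ip n"
    then have lt: "fst e < n" "snd e < n" by (auto simp: Ip_def)
    then have "\<pi> (fst e) < k" "\<pi> (snd e) < k" using pi by auto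
    then have s: "\<sigma> (\<pi> (fst e), \<pi> (snd e)) = sg (\<pi> (fst e)) (\<pi> (snd e))"
        "\<sigma> (\<pi> (snd e), \<pi> (fst e)) = sg (\<pi> (snd e)) (\<pi> (fst e))" by (auto simp: \<sigma>_def)
    have DS: "D (snd e) (fst e) = D (fst e) (snd e)" unfolding D_def using sym lt by (simp add: matA_sym)
    have Dv: "D (fst e) (snd e) = ind (\<omega> e) - Q (fst e) (snd e)" unfolding D_def using matA_Ip[OF e] by simp
    show "sg (\<pi> (fst e)) (\<pi> (snd e)) * D (fst e) (snd e) + sg (\<pi> (snd e)) (\<pi> (fst e)) * D (snd e) (fst e)
        = 2 * (dd \<pi> \<sigma> e * (ind (\<omega> e) - Q (fst e) (snd e)))"
      unfolding dd_def s DS Dv by (simp add: algebra_simps)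
  qed
  finally have "(\<Sum>u<n. \<Sum>v<n. \<bar>blockavg n \<pi> D u v\<bar>) = 2 * Xf n Q (dd \<pi> \<sigma>) \<omega>"
    unfolding Xf_def by (simp add: sum_distrib_left)
  then show ?thesis using Fm unfolding norm1_def diff by (intro exI[of _ \<sigma>]) auto
qed

lemma Xf_le:
  assumes "(\<pi>, \<sigma>) \<in> Fam n k" and Qnn: "\<And>e. e \<in> Ip n \<Longrightarrow> 0 \<le> Q (fst e) (snd e)"
  shows "Xf n Q (dd \<pi> \<sigma>) \<omega> \<le> (\<Sum>e\<in>Ip n. ind (\<omega> e)) + (\<Sum>e\<in>Ip n. Q (fst e) (snd e))"
proof -
  have "Xf n Q (dd \<pi> \<sigma>) \<omega> \<le> (\<Sum>e\<in>Ip n. ind (\<omega> e) + Q (fst e) (snd e))"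
    unfolding Xf_def
  proof (rule sum_mono)
    fix e assume e: "e \<in> Ip n"
    have "dd \<pi> \<sigma> e \<in> {-1,0,1}" by (rule dd_cases[OF assms(1) e])
    then show "dd \<pi> \<sigma> e * (ind (\<omega> e) - Q (fst e) (snd e)) \<le> ind (\<omega> e) + Q (fst e) (snd e)"
      using Qnn[OF e] ind_bounds[of "\<omega> e"] by auto
  qed
  then show ?thesis by (simp add: sum.distrib)
qed

lemma phi_bound:
  fixes l d :: real
  assumes "d \<in> {-1, 0, 1}" "0 \<le> l" "l \<le> 1"
  shows "exp (l * d) - 1 - l * d \<le> l^2"
proof -
  consider "d = -1" | "d = 0" | "d = 1" using assms(1) by auto
  then show ?thesis
  proof cases
    case 1
    have e1: "1 + l \<le> exp l" by (rule exp_ge_add_one_self)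
    have "exp (-l) = 1 / exp l" by (simp add: exp_minus field_simps)
    also have "\<dots> \<le> 1 / (1 + l)" using e1 assms by (intro divide_left_mono) auto
    also have "\<dots> \<le> 1 - l + l^2"
    proof -
      have "1 \<le> (1 + l) * (1 - l + l^2)" using assms by (simp add: algebra_simps power2_eq_square power3_eq_cube)
      then show ?thesis using assms by (simp add: field_simps)
    qed
    finally show ?thesis using 1 by simp
  next
    case 2 then show ?thesis by simp
  next
    case 3 then show ?thesis using exp_bound[of l] assms by simp
  qed
qed

lemma fac_bound:
  fixes q l d :: real
  assumes "d \<in> {-1, 0, 1}" "0 \<le> l" "l \<le> 1" "0 \<le> q" "q \<le> 1"
  shows "exp (l * d * (1 - q)) * q + exp (l * d * (0 - q)) * (1 - q) \<le> exp (q * l^2)"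
proof -
  define y where "y = l * d"
  have "exp (l * d * (1 - q)) * q + exp (l * d * (0 - q)) * (1 - q) = exp (- y * q) * (1 + q * (exp y - 1))"
    unfolding y_def by (simp add: algebra_simps exp_add[symmetric])
  also have "\<dots> \<le> exp (- y * q) * exp (q * (exp y - 1))"
    by (intro mult_left_mono) (auto simp: exp_ge_add_one_self)
  also have "\<dots> = exp (q * (exp y - 1 - y))" by (simp add: exp_add[symmetric] algebra_simps)
  also have "\<dots> \<le> exp (q * l^2)"
    using phi_bound[OF assms(1-3)] assms(4) unfolding y_def by (intro exp_mono mult_left_mono) auto
  finally show ?thesis .
qed

definition Om :: "nat \<Rightarrow> (nat \<Rightarrow> nat \<Rightarrow> real) \<Rightarrow> (nat \<times> nat \<Rightarrow> bool) pmf" where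
  "Om n Q = Pi_pmf (Ip n) False (\<lambda>(i, j). bernoulli_pmf (Q i j))"

lemma bern_Om: "bern n Q = map_pmf matA (Om n Q)"
  unfolding bern_def Om_def matA_def Ip_def by simp

lemma finite_set_Om: "finite (set_pmf (Om n Q))"
proof -
  have "{f. \<forall>x. x \<notin> Ip n \<longrightarrow> f x = False} \<subseteq> (\<lambda>S x. x \<in> S) ` Pow (Ip n)"
  proof
    fix f :: "nat \<times> nat \<Rightarrow> bool" assume "f \<in> {f. \<forall>x. x \<notin> Ip n \<longrightarrow> f x = False}"
    then have "f = (\<lambda>x. x \<in> {x \<in> Ip n. f x})" by (intro ext) auto
    then show "f \<in> (\<lambda>S x. x \<in> S) ` Pow (Ip n)" by blast
  qed
  then have "finite {f. \<forall>x. x \<notin> Ip n \<longrightarrow> f x = False}"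
    by (rule finite_subset) auto
  then show ?thesis unfolding Om_def using set_Pi_pmf_subset[of "Ip n" False] by (rule finite_subset[rotated]) auto
qed

lemma integrable_Om[simp]: "integrable (measure_pmf (Om n Q)) (f :: _ \<Rightarrow> real)"
  by (rule integrable_measure_pmf_finite[OF finite_set_Om])

lemma chern:
  fixes Q :: "nat \<Rightarrow> nat \<Rightarrow> real" and l \<tau> :: real
  assumes Q01: "\<And>e. e \<in> Ip n \<Longrightarrow> 0 \<le> Q (fst e) (snd e) \<and> Q (fst e) (snd e) \<le> 1"
    and d: "\<And>e. e \<in> Ip n \<Longrightarrow> d e \<in> {-1, 0, 1}"
    and l: "0 \<le> l" "l \<le> 1"
  shows "measure_pmf.prob (Om n Q) {\<omega>. \<tau> \<le> Xf n Q d \<omega>}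
           \<le> exp ((\<Sum>e\<in>Ip n. Q (fst e) (snd e)) * l^2 - l * \<tau>)"
proof -
  let ?M = "measure_pmf (Om n Q)"
  let ?S = "{\<omega>. \<tau> \<le> Xf n Q d \<omega>}"
  define f where "f e v = exp (l * d e * (ind v - Q (fst e) (snd e)))" for e v
  have "measure_pmf.prob (Om n Q) ?S = measure_pmf.expectation (Om n Q) (indicator ?S)"
    by simp
  also have "\<dots> \<le> measure_pmf.expectation (Om n Q) (\<lambda>\<omega>. exp (- l * \<tau>) * (\<Prod>e\<in>Ip n. f e (\<omega> e)))"
  proof (rule integral_mono)
    fix \<omega>
    have "exp (- l * \<tau>) * (\<Prod>e\<in>Ip n. f e (\<omega> e)) = exp (l * (Xf n Q d \<omega> - \<tau>))"
      unfolding f_def Xf_def by (simp add: exp_sum[symmetric] exp_add[symmetric] sum_distrib_left algebra_simps)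
    moreover have "indicator ?S \<omega> \<le> exp (l * (Xf n Q d \<omega> - \<tau>))"
      using l by (auto simp: indicator_def)
    ultimately show "indicator ?S \<omega> \<le> exp (- l * \<tau>) * (\<Prod>e\<in>Ip n. f e (\<omega> e))" by simp
  qed auto
  also have "\<dots> = exp (- l * \<tau>) * measure_pmf.expectation (Om n Q) (\<lambda>\<omega>. \<Prod>e\<in>Ip n. f e (\<omega> e))"
    by simp
  also have "measure_pmf.expectation (Om n Q) (\<lambda>\<omega>. \<Prod>e\<in>Ip n. f e (\<omega> e))
      = (\<Prod>e\<in>Ip n. measure_pmf.expectation ((\<lambda>(i, j). bernoulli_pmf (Q i j)) e) (\<lambda>v. f e v))"
    unfolding Om_def
    by (rule expectation_prod_Pi_pmf) (auto simp: f_def intro!: integrable_measure_pmf_finite)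
  also have "\<dots> \<le> (\<Prod>e\<in>Ip n. exp (Q (fst e) (snd e) * l^2))"
  proof (rule prod_mono)
    fix e assume e: "e \<in> Ip n"
    have q: "0 \<le> Q (fst e) (snd e)" "Q (fst e) (snd e) \<le> 1" using Q01[OF e] by auto
    have eq: "(\<lambda>(i, j). bernoulli_pmf (Q i j)) e = bernoulli_pmf (Q (fst e) (snd e))"
      by (cases e) simp
    have "measure_pmf.expectation ((\<lambda>(i, j). bernoulli_pmf (Q i j)) e) (\<lambda>v. f e v)
        = exp (l * d e * (1 - Q (fst e) (snd e))) * Q (fst e) (snd e)
          + exp (l * d e * (0 - Q (fst e) (snd e))) * (1 - Q (fst e) (snd e))"
      unfolding eq using q by (simp add: f_def ind_def)
    also have "\<dots> \<le> exp (Q (fst e) (snd e) * l^2)"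
      by (rule fac_bound[OF d[OF e] l q])
    finally show "0 \<le> measure_pmf.expectation ((\<lambda>(i, j). bernoulli_pmf (Q i j)) e) (\<lambda>v. f e v) \<and>
      measure_pmf.expectation ((\<lambda>(i, j). bernoulli_pmf (Q i j)) e) (\<lambda>v. f e v) \<le> exp (Q (fst e) (snd e) * l^2)"
      by (auto simp: f_def intro!: Bochner_Integration.integral_nonneg_AE)
  qed
  also have "(\<Prod>e\<in>Ip n. exp (Q (fst e) (snd e) * l^2)) = exp ((\<Sum>e\<in>Ip n. Q (fst e) (snd e)) * l^2)"
    by (simp add: exp_sum sum_distrib_right)
  finally show ?thesis
    by (simp add: exp_add[symmetric] mult_left_mono) 
qed

lemma Fam_nonempty_pi: "1 \<le> (k::nat) \<Longrightarrow> ({..<(n::nat)} \<rightarrow>\<^sub>E {..<k}) \<noteq> {}"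
proof -
  assume "1 \<le> k"
  then have "(\<lambda>_\<in>{..<n}. 0) \<in> {..<n} \<rightarrow>\<^sub>E {..<k}" by auto
  then show ?thesis by blast
qed

lemma eps_le_rho:
  fixes Q :: "nat \<Rightarrow> nat \<Rightarrow> real"
  assumes sym: "\<And>a b. a < n \<Longrightarrow> b < n \<Longrightarrow> Q a b = Q b a"
    and diag: "\<And>a. a < n \<Longrightarrow> Q a a = 0"
    and Qnn: "\<And>e. e \<in> Ip n \<Longrightarrow> 0 \<le> Q (fst e) (snd e)"
    and k: "1 \<le> k"
  shows "eps n k (matA \<omega>) Q \<le> rho n (matA \<omega>) + rho n Q"
  unfolding eps_def
proof (rule Max.boundedI)
  show "finite ((\<lambda>\<pi>. norm1 n (\<lambda>u v. blockavg n \<pi> (matA \<omega>) u v - blockavg n \<pi> Q u v)) ` ({..<n} \<rightarrow>\<^sub>E {..<k}))"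
    by (auto intro!: finite_PiE)
  show "(\<lambda>\<pi>. norm1 n (\<lambda>u v. blockavg n \<pi> (matA \<omega>) u v - blockavg n \<pi> Q u v)) ` ({..<n} \<rightarrow>\<^sub>E {..<k}) \<noteq> {}"
    using Fam_nonempty_pi[OF k] by auto
  fix x assume "x \<in> (\<lambda>\<pi>. norm1 n (\<lambda>u v. blockavg n \<pi> (matA \<omega>) u v - blockavg n \<pi> Q u v)) ` ({..<n} \<rightarrow>\<^sub>E {..<k})"
  then obtain \<pi> where pi: "\<pi> \<in> {..<n} \<rightarrow>\<^sub>E {..<k}" and x: "x = norm1 n (\<lambda>u v. blockavg n \<pi> (matA \<omega>) u v - blockavg n \<pi> Q u v)"
    by auto
  obtain \<sigma> where F: "(\<pi>, \<sigma>) \<in> Fam n k" and eq: "x = 2 / (real n)^2 * Xf n Q (dd \<pi> \<sigma>) \<omega>"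
    using rep[where Q=Q and n=n and \<pi>=\<pi> and \<omega>=\<omega> and k=k, OF sym diag pi] x by auto
  have "x \<le> 2 / (real n)^2 * ((\<Sum>e\<in>Ip n. ind (\<omega> e)) + (\<Sum>e\<in>Ip n. Q (fst e) (snd e)))"
    unfolding eq by (intro mult_left_mono Xf_le[where Q=Q, OF F Qnn]) auto
  also have "\<dots> = rho n (matA \<omega>) + rho n Q"
    using rho_mat[of n \<omega>] rho_Q[where Q=Q and n=n, OF sym diag] by (simp add: algebra_simps)
  finally show "x \<le> rho n (matA \<omega>) + rho n Q" .
qed

lemma eps_gt:
  fixes Q :: "nat \<Rightarrow> nat \<Rightarrow> real"
  assumes sym: "\<And>a b. a < n \<Longrightarrow> b < n \<Longrightarrow> Q a b = Q b a"
    and diag: "\<And>a. a < n \<Longrightarrow> Q a a = 0"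
    and k: "1 \<le> k"
    and gt: "T < eps n k (matA \<omega>) Q"
  shows "\<exists>p\<in>Fam n k. T < 2 / (real n)^2 * Xf n Q (dd (fst p) (snd p)) \<omega>"
proof -
  have fin: "finite ((\<lambda>\<pi>. norm1 n (\<lambda>u v. blockavg n \<pi> (matA \<omega>) u v - blockavg n \<pi> Q u v)) ` ({..<n} \<rightarrow>\<^sub>E {..<k}))"
    by (auto intro!: finite_PiE)
  have ne: "(\<lambda>\<pi>. norm1 n (\<lambda>u v. blockavg n \<pi> (matA \<omega>) u v - blockavg n \<pi> Q u v)) ` ({..<n} \<rightarrow>\<^sub>E {..<k}) \<noteq> {}"
    using Fam_nonempty_pi[OF k] by auto
  obtain \<pi> where pi: "\<pi> \<in> {..<n} \<rightarrow>\<^sub>E {..<k}" and x: "T < norm1 n (\<lambda>u v. blockavg n \<pi> (matA \<omega>) u v - blockavg n \<pi> Q u v)"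
    using gt unfolding eps_def Max_gr_iff[OF fin ne] by auto
  obtain \<sigma> where F: "(\<pi>, \<sigma>) \<in> Fam n k" and eq: "norm1 n (\<lambda>u v. blockavg n \<pi> (matA \<omega>) u v - blockavg n \<pi> Q u v) = 2 / (real n)^2 * Xf n Q (dd \<pi> \<sigma>) \<omega>"
    using rep[where Q=Q and n=n and \<pi>=\<pi> and \<omega>=\<omega> and k=k, OF sym diag pi] by auto
  show ?thesis using F x eq by (intro bexI[of _ "(\<pi>, \<sigma>)"]) auto
qed

lemma Eind:
  assumes "e \<in> Ip n" "0 \<le> Q (fst e) (snd e)" "Q (fst e) (snd e) \<le> 1"
  shows "measure_pmf.expectation (Om n Q) (\<lambda>\<omega>. ind (\<omega> e)) = Q (fst e) (snd e)"
proof -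
  have "measure_pmf.expectation (Om n Q) (\<lambda>\<omega>. ind (\<omega> e))
      = measure_pmf.expectation (map_pmf (\<lambda>\<omega>. \<omega> e) (Om n Q)) ind" by simp
  also have "map_pmf (\<lambda>\<omega>. \<omega> e) (Om n Q) = bernoulli_pmf (Q (fst e) (snd e))"
    unfolding Om_def using assms(1) by (subst Pi_pmf_component) (auto simp: split_beta)
  finally show ?thesis using assms by (simp add: ind_def)
qed

lemma rho_le1:
  fixes H :: "nat \<Rightarrow> nat \<Rightarrow> real"
  assumes "\<And>a b. a < n \<Longrightarrow> b < n \<Longrightarrow> H a b \<le> 1" "0 < n"
  shows "rho n H \<le> 1"
proof -
  have "(\<Sum>a<n. \<Sum>b<n. H a b) \<le> (\<Sum>a<n. \<Sum>b<n. 1)"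
    by (intro sum_mono) (use assms in auto)
  then have "(\<Sum>a<n. \<Sum>b<n. H a b) \<le> (real n)^2" by (simp add: power2_eq_square)
  then show ?thesis unfolding rho_def using assms(2) by (simp add: field_simps)
qed

lemma Xf_one: "Xf n Q (\<lambda>_. 1) \<omega> = (\<Sum>e\<in>Ip n. ind (\<omega> e)) - (\<Sum>e\<in>Ip n. Q (fst e) (snd e))"
  unfolding Xf_def by (simp add: sum_subtractf)

lemma two_exp: "2 * real n \<le> exp (real n)"
proof -
  have "1 + real n / 2 \<le> exp (real n / 2)" by (rule exp_ge_add_one_self)
  then have "(1 + real n / 2)^2 \<le> exp (real n / 2) ^ 2" by (intro power_mono) auto
  also have "exp (real n / 2) ^ 2 = exp (real n)" by (simp add: exp_double[symmetric] power2_eq_square exp_add[symmetric])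
  finally have "(1 + real n / 2)^2 \<le> exp (real n)" .
  moreover have "2 * real n \<le> (1 + real n / 2)^2"
    using sum_squares_ge_zero[of "1 - real n / 2" 0] by (simp add: power2_eq_square algebra_simps)
  ultimately show ?thesis by linarith
qed

lemma tail:
  fixes n k :: nat and Q :: "nat \<Rightarrow> nat \<Rightarrow> real"
  assumes k1: "1 \<le> k" and kn: "k \<le> n"
    and sym: "\<And>i j. i < n \<Longrightarrow> j < n \<Longrightarrow> Q i j = Q j i"
    and Q01: "\<And>i j. i < n \<Longrightarrow> j < n \<Longrightarrow> 0 \<le> Q i j \<and> Q i j \<le> 1"
    and diag: "\<And>i. i < n \<Longrightarrow> Q i i = 0"
    and big: "1 \<le> real n * rho n Q"
  shows "measure_pmf.prob (Om n Q)
     {\<omega>. 8 * sqrt (rho n Q * ((1 + ln (real k)) / real n + (real k)^2 / (real n)^2)) < eps n k (matA \<omega>) Q}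
     \<le> exp (- real n)"
proof -
  have n0: "0 < n" using k1 kn by linarith
  have Qe: "\<And>e. e \<in> Ip n \<Longrightarrow> 0 \<le> Q (fst e) (snd e) \<and> Q (fst e) (snd e) \<le> 1"
    using Q01 by (auto simp: Ip_def)
  define m where "m = (\<Sum>e\<in>Ip n. Q (fst e) (snd e))"
  have rhoQ: "rho n Q = 2 / (real n)^2 * m"
    using rho_Q[where Q=Q and n=n, OF sym diag] unfolding m_def by simp
  have m2: "real n \<le> 2 * m"
  proof -
    have "1 \<le> real n * (2 / (real n)^2 * m)" using big rhoQ by simp
    also have "real n * (2 / (real n)^2 * m) = 2 * m / real n" using n0 by (simp add: power2_eq_square field_simps)
    finally show ?thesis using n0 by (simp add: field_simps)
  qed
  have mpos: "0 < m" using m2 n0 by linarith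
  define L where "L = (1 + ln (real k)) / real n + (real k)^2 / (real n)^2"
  define S where "S = sqrt (rho n Q * L)"
  define B where "B = real n * (1 + ln (real k)) + (real k)^2"
  have lnk: "0 \<le> ln (real k)" using k1 by simp
  have B0: "0 \<le> B" unfolding B_def using lnk by simp
  have LB: "L = B / (real n)^2" unfolding L_def B_def using n0 by (simp add: power2_eq_square field_simps)
  define t where "t = (real n)^2 / 2 * (8 * S)"
  have rL: "0 \<le> rho n Q * L" using rhoQ LB mpos B0 by simp
  have S0: "0 \<le> S" unfolding S_def using rL by simp
  have t0: "0 \<le> t" unfolding t_def using S0 by simp
  have tsq: "t^2 = 32 * m * B"
  proof -
    have "t^2 = 16 * (real n)^4 * S^2" unfolding t_def by (simp add: power2_eq_square power4_eq_xxxx)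
    also have "S^2 = rho n Q * L" unfolding S_def using rL by simp
    also have "16 * (real n)^4 * (rho n Q * L) = 32 * m * B"
      unfolding rhoQ LB using n0 by (simp add: power2_eq_square power4_eq_xxxx field_simps)
    finally show ?thesis .
  qed
  let ?bad = "{\<omega>. 8 * S < eps n k (matA \<omega>) Q}"
  have main: "measure_pmf.prob (Om n Q) ?bad \<le> exp (- real n)"
  proof (cases "B \<le> m")
    case True
    define l where "l = sqrt (B / m)"
    have l0: "0 \<le> l" and l1: "l \<le> 1" unfolding l_def using True mpos B0 by auto
    have ml: "m * l^2 = B" unfolding l_def using mpos B0 by simp
    have lt: "2 * B \<le> l * t"
    proof (rule power2_le_imp_le)
      have "(l * t)^2 = l^2 * t^2" by (simp add: power_mult_distrib)
      also have "\<dots> = B / m * (32 * m * B)" unfolding tsq l_def using mpos B0 by simp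
      also have "\<dots> = 32 * B^2" using mpos by (simp add: power2_eq_square field_simps)
      finally show "(2 * B)^2 \<le> (l * t)^2" by (simp add: power2_eq_square)
      show "0 \<le> l * t" using l0 t0 by simp
    qed
    have sub: "?bad \<subseteq> (\<Union>p\<in>Fam n k. {\<omega>. t \<le> Xf n Q (dd (fst p) (snd p)) \<omega>})"
    proof
      fix \<omega> assume "\<omega> \<in> ?bad"
      then have "8 * S < eps n k (matA \<omega>) Q" by simp
      from eps_gt[where Q=Q and n=n and k=k, OF sym diag k1 this]
      obtain p where p: "p \<in> Fam n k" "8 * S < 2 / (real n)^2 * Xf n Q (dd (fst p) (snd p)) \<omega>" by blast
      have "t \<le> Xf n Q (dd (fst p) (snd p)) \<omega>"
      proof -
        have "t < (real n)^2 / 2 * (2 / (real n)^2 * Xf n Q (dd (fst p) (snd p)) \<omega>)"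
          unfolding t_def using p(2) n0 by (intro mult_strict_left_mono) auto
        also have "\<dots> = Xf n Q (dd (fst p) (snd p)) \<omega>" using n0 by simp
        finally show ?thesis by simp
      qed
      then show "\<omega> \<in> (\<Union>p\<in>Fam n k. {\<omega>. t \<le> Xf n Q (dd (fst p) (snd p)) \<omega>})" using p by blast
    qed
    have "measure_pmf.prob (Om n Q) ?bad \<le> measure_pmf.prob (Om n Q) (\<Union>p\<in>Fam n k. {\<omega>. t \<le> Xf n Q (dd (fst p) (snd p)) \<omega>})"
      by (rule measure_pmf.finite_measure_mono[OF sub]) simp
    also have "\<dots> \<le> (\<Sum>p\<in>Fam n k. measure_pmf.prob (Om n Q) {\<omega>. t \<le> Xf n Q (dd (fst p) (snd p)) \<omega>})"
      by (rule measure_pmf.finite_measure_subadditive_finite) auto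
    also have "\<dots> \<le> (\<Sum>p\<in>Fam n k. exp (- B))"
    proof (rule sum_mono)
      fix p assume p: "p \<in> Fam n k"
      have "measure_pmf.prob (Om n Q) {\<omega>. t \<le> Xf n Q (dd (fst p) (snd p)) \<omega>} \<le> exp (m * l^2 - l * t)"
        unfolding m_def
        by (rule chern[where Q=Q and n=n, OF Qe _ l0 l1]) (use dd_cases[of "fst p" "snd p" n k] p in auto)
      also have "\<dots> \<le> exp (- B)" using ml lt by simp
      finally show "measure_pmf.prob (Om n Q) {\<omega>. t \<le> Xf n Q (dd (fst p) (snd p)) \<omega>} \<le> exp (- B)" .
    qed
    also have "\<dots> = real (k ^ n * 2 ^ (k * k)) * exp (- B)" by (simp add: card_Fam)
    also have "\<dots> \<le> exp (- real n)"
    proof -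
      have ek: "exp (real n * ln (real k)) = real k ^ n"
        using k1 by (simp add: exp_of_nat_mult)
      have e2: "(2::real) ^ (k * k) \<le> exp (real (k * k))"
      proof -
        have "(2::real) ^ (k * k) \<le> exp 1 ^ (k * k)"
          using exp_ge_add_one_self[of 1] by (intro power_mono) auto
        also have "\<dots> = exp (real (k * k))" by (simp add: exp_of_nat_mult[symmetric])
        finally show ?thesis .
      qed
      have "exp (- B) = exp (- real n) / (real k ^ n * exp (real (k * k)))"
        unfolding B_def ek[symmetric]
        by (simp add: exp_add[symmetric] exp_diff[symmetric] power2_eq_square algebra_simps exp_minus field_simps)
      then have "real (k ^ n * 2 ^ (k * k)) * exp (- B)
          = exp (- real n) * (2 ^ (k * k) / exp (real (k * k)))"
        using k1 by (simp add: field_simps)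
      also have "\<dots> \<le> exp (- real n) * 1"
        using e2 by (intro mult_left_mono) auto
      finally show ?thesis by simp
    qed
    finally show ?thesis .
  next
    case False
    have t5: "5 * m \<le> t"
    proof (rule power2_le_imp_le)
      show "(5 * m)^2 \<le> t^2" unfolding tsq using False mpos
        by (simp add: power2_eq_square)
    qed (fact t0)
    have sub: "?bad \<subseteq> {\<omega>. 3 * m \<le> Xf n Q (\<lambda>_. 1) \<omega>}"
    proof
      fix \<omega> assume "\<omega> \<in> ?bad"
      then have "8 * S < eps n k (matA \<omega>) Q" by simp
      also have "\<dots> \<le> rho n (matA \<omega>) + rho n Q"
        by (rule eps_le_rho[where Q=Q and n=n and k=k, OF sym diag _ k1]) (use Qe in auto)
      also have "\<dots> = 2 / (real n)^2 * ((\<Sum>e\<in>Ip n. ind (\<omega> e)) + m)"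
        unfolding rho_mat rhoQ by (simp add: algebra_simps add_divide_distrib)
      finally have "t < (real n)^2 / 2 * (2 / (real n)^2 * ((\<Sum>e\<in>Ip n. ind (\<omega> e)) + m))"
        unfolding t_def using n0 by (intro mult_strict_left_mono) auto
      also have "\<dots> = (\<Sum>e\<in>Ip n. ind (\<omega> e)) + m" using n0 by simp
      finally have "t < (\<Sum>e\<in>Ip n. ind (\<omega> e)) + m" .
      then show "\<omega> \<in> {\<omega>. 3 * m \<le> Xf n Q (\<lambda>_. 1) \<omega>}"
        using t5 unfolding Xf_one m_def by simp
    qed
    have "measure_pmf.prob (Om n Q) ?bad \<le> measure_pmf.prob (Om n Q) {\<omega>. 3 * m \<le> Xf n Q (\<lambda>_. 1) \<omega>}"
      by (rule measure_pmf.finite_measure_mono[OF sub]) simp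
    also have "\<dots> \<le> exp (m * 1^2 - 1 * (3 * m))"
      unfolding m_def by (rule chern[where Q=Q and n=n, OF Qe]) auto
    also have "\<dots> \<le> exp (- real n)" using m2 by simp
    finally show ?thesis .
  qed
  then show ?thesis unfolding S_def L_def .
qed

theorem lemmaB2:
  fixes n k :: nat and Q :: "nat \<Rightarrow> nat \<Rightarrow> real"
  assumes "1 \<le> k" "k \<le> n"
    and "\<And>i j. i < n \<Longrightarrow> j < n \<Longrightarrow> Q i j = Q j i"
    and "\<And>i j. i < n \<Longrightarrow> j < n \<Longrightarrow> 0 \<le> Q i j \<and> Q i j \<le> 1"
    and "\<And>i. i < n \<Longrightarrow> Q i i = 0"
  shows "measure_pmf.expectation (bern n Q) (\<lambda>A. eps n k A Q)
           \<le> 9 * sqrt (rho n Q * ((1 + ln (real k)) / real n + (real k)^2 / (real n)^2))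
       \<and> (real n * rho n Q \<ge> 1 \<longrightarrow>
         measure_pmf.prob (bern n Q)
           {A. eps n k A Q \<le> 8 * sqrt (rho n Q * ((1 + ln (real k)) / real n + (real k)^2 / (real n)^2))}
         \<ge> 1 - exp (- real n))"
proof -
  note k1 = assms(1) and kn = assms(2) and sym = assms(3) and Q01 = assms(4) and diag = assms(5)
  have n0: "0 < n" using k1 kn by linarith
  have Qe: "\<And>e. e \<in> Ip n \<Longrightarrow> 0 \<le> Q (fst e) (snd e) \<and> Q (fst e) (snd e) \<le> 1"
    using Q01 by (auto simp: Ip_def)
  define m where "m = (\<Sum>e\<in>Ip n. Q (fst e) (snd e))"
  have m0: "0 \<le> m" unfolding m_def using Qe by (auto intro!: sum_nonneg)
  have rhoQ: "rho n Q = 2 / (real n)^2 * m"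
    using rho_Q[where Q=Q and n=n, OF sym diag] unfolding m_def by simp
  have rho0: "0 \<le> rho n Q" using rhoQ m0 by simp
  define L where "L = (1 + ln (real k)) / real n + (real k)^2 / (real n)^2"
  define S where "S = sqrt (rho n Q * L)"
  have lnk: "0 \<le> ln (real k)" using k1 by simp
  have L1: "1 / real n \<le> L"
  proof -
    have "1 / real n \<le> (1 + ln (real k)) / real n" using lnk n0 by (intro divide_right_mono) auto
    then show ?thesis unfolding L_def by (simp add: add_increasing2)
  qed
  have L0: "0 \<le> L" using L1 n0 by (smt (verit) divide_nonneg_nonneg of_nat_0_le_iff)
  have S0: "0 \<le> S" unfolding S_def using rho0 L0 by simp
  have eps_bd: "eps n k (matA \<omega>) Q \<le> rho n (matA \<omega>) + rho n Q" for \<omega>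
    by (rule eps_le_rho[where Q=Q and n=n and k=k, OF sym diag _ k1]) (use Qe in auto)
  have rhoA1: "rho n (matA \<omega>) \<le> 1" for \<omega>
    by (rule rho_le1[OF _ n0]) (auto simp: matA_def)
  have rhoQ1: "rho n Q \<le> 1"
    by (rule rho_le1[OF _ n0]) (use Q01 in auto)
  have Erho: "measure_pmf.expectation (Om n Q) (\<lambda>\<omega>. rho n (matA \<omega>)) = rho n Q"
  proof -
    have "measure_pmf.expectation (Om n Q) (\<lambda>\<omega>. rho n (matA \<omega>))
        = measure_pmf.expectation (Om n Q) (\<lambda>\<omega>. 2 / (real n)^2 * (\<Sum>e\<in>Ip n. ind (\<omega> e)))"
      by (simp add: rho_mat)
    also have "\<dots> = 2 / (real n)^2 * (\<Sum>e\<in>Ip n. measure_pmf.expectation (Om n Q) (\<lambda>\<omega>. ind (\<omega> e)))"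
      by (simp add: Bochner_Integration.integral_sum)
    also have "(\<Sum>e\<in>Ip n. measure_pmf.expectation (Om n Q) (\<lambda>\<omega>. ind (\<omega> e))) = m"
      unfolding m_def by (intro sum.cong refl Eind) (use Qe in auto)
    finally show ?thesis using rhoQ by simp
  qed
  have Ebern: "measure_pmf.expectation (bern n Q) (\<lambda>A. eps n k A Q)
      = measure_pmf.expectation (Om n Q) (\<lambda>\<omega>. eps n k (matA \<omega>) Q)"
    unfolding bern_Om by simp
  have part1: "measure_pmf.expectation (bern n Q) (\<lambda>A. eps n k A Q) \<le> 9 * S"
  proof (cases "1 \<le> real n * rho n Q")
    case False
    have "measure_pmf.expectation (Om n Q) (\<lambda>\<omega>. eps n k (matA \<omega>) Q)
        \<le> measure_pmf.expectation (Om n Q) (\<lambda>\<omega>. rho n (matA \<omega>) + rho n Q)"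
      by (rule integral_mono) (auto intro: eps_bd)
    also have "\<dots> = 2 * rho n Q" using Erho by simp
    also have "\<dots> \<le> 9 * S"
    proof -
      have r: "rho n Q \<le> 1 / real n" using False n0 by (simp add: field_simps)
      have "(2 * rho n Q)^2 = 4 * (rho n Q * rho n Q)" by (simp add: power2_eq_square)
      also have "\<dots> \<le> 4 * (rho n Q * L)"
        using r L1 rho0 by (intro mult_left_mono) auto
      also have "\<dots> \<le> 81 * (rho n Q * L)" using rho0 L0 by simp
      finally have "2 * rho n Q \<le> sqrt (81 * (rho n Q * L))" by (rule real_le_rsqrt)
      also have "sqrt (81 * (rho n Q * L)) = 9 * S"
        unfolding S_def real_sqrt_mult by simp
      finally show ?thesis .
    qed
    finally show ?thesis using Ebern by simp
  next
    case True
    let ?bad = "{\<omega>. 8 * S < eps n k (matA \<omega>) Q}"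
    have tl: "measure_pmf.prob (Om n Q) ?bad \<le> exp (- real n)"
      using tail[OF k1 kn sym Q01 diag True] unfolding S_def L_def .
    have "measure_pmf.expectation (Om n Q) (\<lambda>\<omega>. eps n k (matA \<omega>) Q)
        \<le> measure_pmf.expectation (Om n Q) (\<lambda>\<omega>. 8 * S + 2 * indicator ?bad \<omega>)"
    proof (rule integral_mono)
      fix \<omega>
      show "eps n k (matA \<omega>) Q \<le> 8 * S + 2 * indicator ?bad \<omega>"
      proof (cases "\<omega> \<in> ?bad")
        case True
        have "eps n k (matA \<omega>) Q \<le> 2" using eps_bd[of \<omega>] rhoA1[of \<omega>] rhoQ1 by simp
        then show ?thesis using True S0 by simp
      next
        case False
        then show ?thesis by simp
      qed
    qed auto
    also have "\<dots> = 8 * S + 2 * measure_pmf.prob (Om n Q) ?bad"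
      by simp
    also have "\<dots> \<le> 8 * S + 2 * exp (- real n)" using tl by simp
    also have "\<dots> \<le> 9 * S"
    proof -
      have rr: "1 / real n \<le> rho n Q" using True n0 by (simp add: field_simps)
      have "(1 / real n)^2 \<le> rho n Q * L"
        unfolding power2_eq_square using rr L1 n0 rho0 by (intro mult_mono) auto
      then have s1: "1 / real n \<le> S" unfolding S_def by (rule real_le_rsqrt)
      have "2 * exp (- real n) \<le> 1 / real n"
        using two_exp[of n] n0 by (simp add: exp_minus field_simps)
      then show ?thesis using s1 by simp
    qed
    finally show ?thesis using Ebern by simp
  qed
  have part2: "measure_pmf.prob (bern n Q) {A. eps n k A Q \<le> 8 * S} \<ge> 1 - exp (- real n)"
    if big: "1 \<le> real n * rho n Q"
  proof -
    let ?bad = "{\<omega>. 8 * S < eps n k (matA \<omega>) Q}"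
    have tl: "measure_pmf.prob (Om n Q) ?bad \<le> exp (- real n)"
      using tail[OF k1 kn sym Q01 diag big] unfolding S_def L_def .
    have "measure_pmf.prob (bern n Q) {A. eps n k A Q \<le> 8 * S}
        = measure_pmf.prob (Om n Q) (space (measure_pmf (Om n Q)) - ?bad)"
      unfolding bern_Om by (simp add: vimage_def set_diff_eq not_less)
    also have "\<dots> = 1 - measure_pmf.prob (Om n Q) ?bad"
      by (rule measure_pmf.prob_compl) simp
    finally show ?thesis using tl by simp
  qed
  show ?thesis using part1 part2 unfolding S_def L_def by auto
qed

end
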